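(* Let $f_n(x)=\sum_{[\pi]\in\mathfrak{C}_{n}^o}x^{\operatorname{drop}_{oo}([\pi])}$. Then $f_1=1$ and for every $n\ge1$: (i) $f_{2n}=nf_{2n-1}-x\frac{d}{dx}f_{2n-1}+\frac{d}{dx}f_{2n-1}$; (ii) $f_{2n+1}=nxf_{2n}-x^2\frac{d}{dx}f_{2n}+x\frac{d}{dx}f_{2n}$.
   Context: For $n\ge1$, a cycle on $[n]=\{1,\dots,n\}$ is an equivalence class $[\pi]$ of permutations $\pi=\pi_1\cdots\pi_n$ of $[n]$ (in one-line notation) under cyclic rotation of the entries; the set of cycles on $[n]$ is $\mathfrak{C}_n$. Each cycle is represented by the permutation $\pi$ with $\pi_1=1$, and indices are read modulo $n$. A drop of $[\pi]$ is a consecutive pair $(\pi_i,\pi_{i+1})$, $1\le i\le n$, with $\pi_i>\pi_{i+1}$. By convention, the unique cycle $[(1)]\in\mathfrak{C}_1$ has exactly one drop $(\star,1)$, where $\star$ is considered neither even nor odd. A drop $(a,b)$ is odd-odd if $a,b$ are both odd; $\operatorname{drop}_{oo}([\pi])$ is the number of odd-odd drops of $[\pi]$. $\mathfrak{C}_n^o$ is the set of cycles $[\pi]\in\mathfrak{C}_n$ such that for every drop $(\pi_i,\pi_{i+1})$, the entry $\pi_{i+1}$ is odd. *)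

theory Defs
  imports "HOL-Computational_Algebra.Polynomial"
begin

text \<open>A cycle on [n] is represented by its unique representative permutation
  (one-line notation, as a list) whose first entry is 1.\<close>
definition cycle_reps :: "nat \<Rightarrow> nat list set" where
  "cycle_reps n = {p. length p = n \<and> distinct p \<and> set p = {1..n} \<and> p \<noteq> [] \<and> p ! 0 = 1}"

definition nxt :: "nat list \<Rightarrow> nat \<Rightarrow> nat" where
  "nxt p i = p ! ((i + 1) mod length p)"

definition drop_pos :: "nat list \<Rightarrow> nat set" where
  "drop_pos p = {i. i < length p \<and> p ! i > nxt p i}"

definition drop_oo :: "nat list \<Rightarrow> nat" where
  "drop_oo p = card {i \<in> drop_pos p. odd (p ! i) \<and> odd (nxt p i)}"

definition cycles_o :: "nat \<Rightarrow> nat list set" where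
  "cycles_o n = {p \<in> cycle_reps n. \<forall>i \<in> drop_pos p. odd (nxt p i)}"

definition f_poly :: "nat \<Rightarrow> int poly" where
  "f_poly n = (\<Sum>p \<in> cycles_o n. monom 1 (drop_oo p))"

end

theory Submission
  imports Defs
begin

fun pe :: "'a list \<Rightarrow> ('a \<times> 'a) list" where
  "pe (a # b # l) = (a, b) # pe (b # l)"
| "pe _ = []"

lemma pe_len: "length (pe l) = length l - 1"
  by (induction l rule: pe.induct) auto

lemma pe_nth: "j < length l - 1 \<Longrightarrow> pe l ! j = (l ! j, l ! Suc j)"
proof (induction l arbitrary: j rule: pe.induct)
  case (1 a b l)
  then show ?case by (cases j) auto
qed auto

lemma pe_append: "A \<noteq> [] \<Longrightarrow> B \<noteq> [] \<Longrightarrow> pe (A @ B) = pe A @ (last A, hd B) # pe B"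
proof (induction A)
  case (Cons a A')
  then show ?case by (cases A'; cases B) auto
qed auto

lemma pe_Cons: "B \<noteq> [] \<Longrightarrow> pe (a # B) = (a, hd B) # pe B"
  by (cases B) auto

lemma map_snd_pe: "map snd (pe l) = tl l"
  by (induction l rule: pe.induct) auto

definition edges :: "nat list \<Rightarrow> (nat \<times> nat) list" where
  "edges p = pe (p @ [hd p])"

lemma len_edges: "length (edges p) = length p"
  by (simp add: edges_def pe_len)

lemma edges_nth:
  assumes "p \<noteq> []" "j < length p"
  shows "edges p ! j = (p ! j, nxt p j)"
proof -
  have "edges p ! j = ((p @ [hd p]) ! j, (p @ [hd p]) ! Suc j)"
    unfolding edges_def using assms by (intro pe_nth) auto
  moreover have "(p @ [hd p]) ! Suc j = nxt p j"
  proof (cases "Suc j < length p")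
    case True then show ?thesis by (simp add: nxt_def nth_append)
  next
    case False
    then have "Suc j = length p" using assms by auto
    then show ?thesis using assms by (simp add: nxt_def nth_append hd_conv_nth)
  qed
  ultimately show ?thesis using assms by (simp add: nth_append)
qed

definition oo :: "nat \<times> nat \<Rightarrow> bool" where
  "oo e = (snd e < fst e \<and> odd (fst e) \<and> odd (snd e))"

definition dc :: "nat \<times> nat \<Rightarrow> bool" where
  "dc e = (snd e < fst e \<longrightarrow> odd (snd e))"

lemma drop_oo_edges:
  assumes "p \<noteq> []"
  shows "drop_oo p = length (filter oo (edges p))"
proof -
  have "{i \<in> drop_pos p. odd (p ! i) \<and> odd (nxt p i)} = {i. i < length (edges p) \<and> oo (edges p ! i)}"
    using assms by (auto simp: drop_pos_def len_edges edges_nth oo_def)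
  then show ?thesis by (simp add: drop_oo_def length_filter_conv_card)
qed

lemma cond_edges:
  assumes "p \<noteq> []"
  shows "(\<forall>i \<in> drop_pos p. odd (nxt p i)) \<longleftrightarrow> (\<forall>e \<in> set (edges p). dc e)"
proof
  assume H: "\<forall>i \<in> drop_pos p. odd (nxt p i)"
  show "\<forall>e \<in> set (edges p). dc e"
    using assms H by (auto simp: drop_pos_def set_conv_nth len_edges edges_nth dc_def)
next
  assume H: "\<forall>e \<in> set (edges p). dc e"
  show "\<forall>i \<in> drop_pos p. odd (nxt p i)"
  proof
    fix i assume i: "i \<in> drop_pos p"
    then have "edges p ! i \<in> set (edges p)" by (simp add: drop_pos_def len_edges)
    then have "dc (edges p ! i)" using H by blast
    then show "odd (nxt p i)" using i assms by (simp add: drop_pos_def edges_nth dc_def)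
  qed
qed

definition ins :: "nat list \<Rightarrow> nat \<Rightarrow> nat list" where
  "ins p i = take (Suc i) p @ Suc (length p) # drop (Suc i) p"

lemma edges_ins:
  assumes "p \<noteq> []" "i < length p"
  defines "A \<equiv> take (Suc i) p" and "B \<equiv> drop (Suc i) p @ [hd p]"
  shows "edges p = pe A @ (p ! i, nxt p i) # pe B"
    and "edges (ins p i) = pe A @ (p ! i, Suc (length p)) # (Suc (length p), nxt p i) # pe B"
proof -
  have A: "A \<noteq> []" "last A = p ! i" using assms
    by (auto simp: A_def take_Suc_conv_app_nth)
  have B: "B \<noteq> []" by (simp add: B_def)
  have hB: "hd B = nxt p i"
  proof (cases "Suc i < length p")
    case True then show ?thesis by (simp add: B_def nxt_def hd_drop_conv_nth)
  next
    case False
    then have "Suc i = length p" using assms by auto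
    then show ?thesis using assms by (simp add: B_def nxt_def hd_conv_nth)
  qed
  have "p @ [hd p] = A @ B" by (simp add: A_def B_def)
  then show "edges p = pe A @ (p ! i, nxt p i) # pe B"
    unfolding edges_def using A B hB by (simp add: pe_append)
  have h: "hd (ins p i) = hd p" 
  proof -
    obtain x xs where "p = x # xs" using assms(1) by (cases p) auto
    then show ?thesis by (simp add: ins_def)
  qed
  have "ins p i @ [hd (ins p i)] = A @ ([Suc (length p)] @ B)"
    unfolding h by (simp add: ins_def A_def B_def)
  then show "edges (ins p i) = pe A @ (p ! i, Suc (length p)) # (Suc (length p), nxt p i) # pe B"
    unfolding edges_def using A B hB by (simp add: pe_append pe_Cons)
qed


lemma cyc_facts:
  assumes "p \<in> cycles_o L"
  shows "length p = L" "distinct p" "set p = {1..L}" "p \<noteq> []" "p ! 0 = 1"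
    "\<forall>e \<in> set (edges p). dc e"
  using assms cond_edges[of p] by (auto simp: cycles_o_def cycle_reps_def)

lemma nxt_in: "p \<noteq> [] \<Longrightarrow> nxt p i \<in> set p"
  by (simp add: nxt_def)

lemma ins_in:
  assumes "p \<in> cycles_o L" "i < L" "odd (nxt p i)"
  shows "ins p i \<in> cycles_o (Suc L)"
proof -
  note f = cyc_facts[OF assms(1)]
  have mn: "Suc L \<notin> set p" using f by auto
  have d: "distinct (take (Suc i) p)" "distinct (drop (Suc i) p)"
    "set (take (Suc i) p) \<inter> set (drop (Suc i) p) = {}"
    using f(2) by (metis append_take_drop_id distinct_append)+
  have mn': "Suc (length p) \<notin> set (take (Suc i) p)" "Suc (length p) \<notin> set (drop (Suc i) p)"
    using mn f(1) by (auto dest: in_set_takeD in_set_dropD)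
  have st: "set (ins p i) = insert (Suc L) (set p)"
  proof -
    have "set (ins p i) = insert (Suc L) (set (take (Suc i) p) \<union> set (drop (Suc i) p))"
      using f by (simp add: ins_def)
    also have "\<dots> = insert (Suc L) (set p)" by (metis set_append append_take_drop_id)
    finally show ?thesis .
  qed
  have dist: "distinct (ins p i)"
    using d mn' unfolding ins_def by (simp add: distinct_append del: append_take_drop_id)
  have len: "length (ins p i) = Suc L" using f assms(2) by (simp add: ins_def)
  have h0: "ins p i ! 0 = 1" using f assms(2) by (simp add: ins_def nth_append)
  have pi: "p ! i \<in> set p" using f(1) assms(2) by (metis nth_mem)
  have nx: "nxt p i \<in> set p" using f(4) by (rule nxt_in)
  have "\<forall>e \<in> set (edges (ins p i)). dc e"
    using edges_ins[of p i] f assms pi nx by (auto simp: dc_def)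
  then have "\<forall>j \<in> drop_pos (ins p i). odd (nxt (ins p i) j)"
    using cond_edges[of "ins p i"] by (simp add: ins_def)
  then show ?thesis using st dist len h0 f
    by (auto simp: cycles_o_def cycle_reps_def)
qed

lemma ins_surj:
  assumes "q \<in> cycles_o (Suc L)" "L \<ge> 1"
  shows "\<exists>p i. p \<in> cycles_o L \<and> i < L \<and> odd (nxt p i) \<and> q = ins p i"
proof -
  note f = cyc_facts[OF assms(1)]
  have "Suc L \<in> set q" using f by auto
  then obtain u v where q: "q = u @ Suc L # v" by (meson split_list)
  have u: "u \<noteq> []" using q f(5) assms(2) by (cases u) auto
  define p where "p = u @ v"
  define i where "i = length u - 1"
  have lp: "length p = L" using f(1) q by (simp add: p_def)
  have "length u > 0" using u by simp
  moreover have "length u + length v = L" using lp by (simp add: p_def)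
  ultimately have iL: "i < L" unfolding i_def by linarith
  have qi: "q = ins p i" using u q lp by (simp add: ins_def i_def p_def)
  have dp: "distinct p" using f(2) q by (simp add: p_def)
  have nm: "Suc L \<notin> set u" "Suc L \<notin> set v" using f(2) q by auto
  have sp: "set p = {1..L}"
  proof -
    have "set q = insert (Suc L) (set p)" using q by (auto simp: p_def)
    then have "insert (Suc L) (set p) = {1..Suc L}" using f(3) by simp
    moreover have "Suc L \<notin> set p" using nm by (simp add: p_def)
    moreover have "Suc L \<notin> {1..L}" by simp
    ultimately show ?thesis by (simp add: atLeastAtMostSuc_conv insert_ident)
  qed
  have pne: "p \<noteq> []" using u by (simp add: p_def)
  have p0: "p ! 0 = 1" using u f(5) q by (simp add: p_def nth_append)
  have pi: "p ! i \<in> set p" using lp iL by simp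
  have nx: "nxt p i \<in> set p" using pne by (rule nxt_in)
  have E: "\<forall>e \<in> set (edges (ins p i)). dc e" using f(6) qi by simp
  then have "dc (Suc L, nxt p i)" using edges_ins(2)[OF pne, of i] iL lp by simp
  then have odd: "odd (nxt p i)" using nx sp by (auto simp: dc_def)
  have "\<forall>e \<in> set (edges p). dc e"
    using E edges_ins[OF pne, of i] iL lp odd by (auto simp: dc_def)
  then have "\<forall>j \<in> drop_pos p. odd (nxt p j)" using cond_edges[OF pne] by simp
  then have "p \<in> cycles_o L" using lp dp sp pne p0
    by (simp add: cycles_o_def cycle_reps_def)
  then show ?thesis using iL odd qi by blast
qed

lemma ins_inj:
  assumes "p \<in> cycles_o L" "i < L" "p' \<in> cycles_o L" "j < L" "ins p i = ins p' j"
  shows "p = p' \<and> i = j"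
proof -
  note f = cyc_facts[OF assms(1)] and g = cyc_facts[OF assms(3)]
  have n1: "Suc L \<notin> set (take (Suc i) p)" "Suc L \<notin> set (drop (Suc i) p)"
    using f by (auto dest: in_set_takeD in_set_dropD)
  have eq: "take (Suc i) p @ Suc L # drop (Suc i) p = take (Suc j) p' @ Suc L # drop (Suc j) p'"
    using assms(5) f(1) g(1) unfolding ins_def by simp
  have "take (Suc i) p = take (Suc j) p' \<and> drop (Suc i) p = drop (Suc j) p'"
    using append_Cons_eq_iff[OF n1, of "take (Suc j) p'" "drop (Suc j) p'"] eq by blast
  moreover have "Suc i = Suc j"
    using arg_cong[OF calculation[THEN conjunct1], of length] f(1) g(1) assms(2,4) by simp
  ultimately show ?thesis by (metis append_take_drop_id nat.inject)
qed

lemma drop_oo_ins: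
  assumes "p \<in> cycles_o L" "i < L" "odd (nxt p i)"
  shows "drop_oo (ins p i) + (if oo (p ! i, nxt p i) then 1 else 0)
         = drop_oo p + (if odd (Suc L) then 1 else 0)"
proof -
  note f = cyc_facts[OF assms(1)]
  have pi: "p ! i \<in> set p" using f(1) assms(2) by (metis nth_mem)
  have nx: "nxt p i \<in> set p" using f(4) by (rule nxt_in)
  have ne: "ins p i \<noteq> []" by (simp add: ins_def)
  show ?thesis
    unfolding drop_oo_edges[OF ne] drop_oo_edges[OF f(4)]
    using edges_ins[OF f(4), of i] f(1,3) assms pi nx by (auto simp: oo_def)
qed

lemma card_odd: "card ({x::nat. odd x} \<inter> {1..L}) = Suc L div 2"
proof (induction L)
  case 0 then show ?case by simp
next
  case (Suc L)
  have "{x::nat. odd x} \<inter> {1..Suc L} = (if odd (Suc L) then insert (Suc L) ({x. odd x} \<inter> {1..L}) else {x. odd x} \<inter> {1..L})"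
    by (auto simp: atLeastAtMostSuc_conv)
  then show ?case using Suc by auto
qed

lemma card_I:
  assumes "p \<in> cycles_o L"
  shows "card {i. i < L \<and> odd (nxt p i)} = Suc L div 2"
proof -
  note f = cyc_facts[OF assms(1)]
  have "length (filter (\<lambda>e. odd (snd e)) (edges p)) = card {i. i < L \<and> odd (nxt p i)}"
    unfolding length_filter_conv_card using f by (intro arg_cong[where f=card]) (auto simp: len_edges edges_nth)
  moreover have "length (filter (\<lambda>e. odd (snd e)) (edges p)) = length (filter odd (map snd (edges p)))"
    by (simp add: filter_map comp_def)
  moreover have "map snd (edges p) = tl p @ [hd p]" using f(4) by (simp add: edges_def map_snd_pe)
  moreover have "length (filter odd (tl p @ [hd p])) = length (filter odd p)"
    using f(4) by (cases p) auto
  moreover have "length (filter odd p) = Suc L div 2"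
    using distinct_length_filter[OF f(2)] f(3) card_odd by simp
  ultimately show ?thesis by simp
qed

lemma card_O:
  assumes "p \<in> cycles_o L"
  shows "card {i. i < L \<and> oo (p ! i, nxt p i)} = drop_oo p"
proof -
  note f = cyc_facts[OF assms(1)]
  show ?thesis unfolding drop_oo_edges[OF f(4)] length_filter_conv_card
    using f by (intro arg_cong[where f=card]) (auto simp: len_edges edges_nth)
qed

lemma finite_cyc: "finite (cycles_o L)"
proof (rule finite_subset)
  show "cycles_o L \<subseteq> {xs. set xs \<subseteq> {1..L} \<and> length xs = L}"
    by (auto simp: cycles_o_def cycle_reps_def)
  show "finite {xs. set xs \<subseteq> {1..L} \<and> length xs = (L::nat)}"
    by (rule finite_lists_length_eq) simp
qed

lemma of_nat_monom: "(of_nat n :: int poly) * monom 1 j = monom (of_nat n) j"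
  by (induction n) (simp_all add: algebra_simps add_monom)

lemma recur:
  assumes L: "L \<ge> 1"
  defines "e \<equiv> (if odd (Suc L) then 1 else 0 :: nat)" and "h \<equiv> Suc L div 2"
  shows "f_poly (Suc L) = (\<Sum>p\<in>cycles_o L. monom (of_nat (drop_oo p)) (drop_oo p + e - 1)
            + monom (of_nat (h - drop_oo p)) (drop_oo p + e))"
    and "\<And>p. p \<in> cycles_o L \<Longrightarrow> drop_oo p \<le> h"
proof -
  define I where "I p = {i. i < L \<and> odd (nxt p i)}" for p
  define Od where "Od p = {i. i < L \<and> oo (p ! i, nxt p i)}" for p
  define T where "T = Sigma (cycles_o L) I"
  have OdI: "Od p \<subseteq> I p" for p by (auto simp: Od_def I_def oo_def)
  have fI: "finite (I p)" for p by (simp add: I_def)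
  have cI: "p \<in> cycles_o L \<Longrightarrow> card (I p) = h" for p using card_I by (simp add: I_def h_def)
  have cOd: "p \<in> cycles_o L \<Longrightarrow> card (Od p) = drop_oo p" for p using card_O by (simp add: Od_def)
  show le: "\<And>p. p \<in> cycles_o L \<Longrightarrow> drop_oo p \<le> h"
    using cI cOd OdI fI by (metis card_mono)
  have img: "cycles_o (Suc L) = (\<lambda>(p, i). ins p i) ` T"
  proof
    show "cycles_o (Suc L) \<subseteq> (\<lambda>(p, i). ins p i) ` T"
    proof
      fix q assume "q \<in> cycles_o (Suc L)"
      then obtain p i where "p \<in> cycles_o L" "i < L" "odd (nxt p i)" "q = ins p i"
        using ins_surj L by blast
      then show "q \<in> (\<lambda>(p, i). ins p i) ` T" by (auto simp: T_def I_def)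
    qed
    show "(\<lambda>(p, i). ins p i) ` T \<subseteq> cycles_o (Suc L)"
      using ins_in by (auto simp: T_def I_def)
  qed
  have inj: "inj_on (\<lambda>(p, i). ins p i) T"
    by (rule inj_onI) (use ins_inj in \<open>auto simp: T_def I_def\<close>)
  have "f_poly (Suc L) = (\<Sum>(p, i)\<in>T. monom 1 (drop_oo (ins p i)))"
    unfolding f_poly_def img by (subst sum.reindex[OF inj]) (simp add: case_prod_beta)
  also have "\<dots> = (\<Sum>p\<in>cycles_o L. \<Sum>i\<in>I p. monom 1 (drop_oo (ins p i)))"
    unfolding T_def by (rule sum.Sigma[symmetric]) (simp_all add: finite_cyc fI)
  also have "\<dots> = (\<Sum>p\<in>cycles_o L. monom (of_nat (drop_oo p)) (drop_oo p + e - 1)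
            + monom (of_nat (h - drop_oo p)) (drop_oo p + e))"
  proof (rule sum.cong[OF refl])
    fix p assume p: "p \<in> cycles_o L"
    have d1: "drop_oo (ins p i) = drop_oo p + e - 1" if "i \<in> Od p" for i
      using drop_oo_ins[OF p, of i] that OdI[of p] by (auto simp: Od_def I_def e_def)
    have d2: "drop_oo (ins p i) = drop_oo p + e" if "i \<in> I p - Od p" for i
      using drop_oo_ins[OF p, of i] that by (auto simp: Od_def I_def e_def)
    have "(\<Sum>i\<in>I p. monom (1::int) (drop_oo (ins p i)))
        = (\<Sum>i\<in>I p - Od p. monom 1 (drop_oo (ins p i))) + (\<Sum>i\<in>Od p. monom 1 (drop_oo (ins p i)))"
      by (rule sum.subset_diff[OF OdI fI])
    also have "\<dots> = (\<Sum>i\<in>I p - Od p. monom 1 (drop_oo p + e)) + (\<Sum>i\<in>Od p. monom 1 (drop_oo p + e - 1))"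
      using d1 d2 by simp
    also have "\<dots> = monom (of_nat (h - drop_oo p)) (drop_oo p + e) + monom (of_nat (drop_oo p)) (drop_oo p + e - 1)"
    proof -
      have c1: "card (I p - Od p) = h - drop_oo p"
        using cI[OF p] cOd[OF p] OdI[of p] fI[of p] by (simp add: card_Diff_subset finite_subset)
      show ?thesis unfolding sum_constant c1 cOd[OF p] of_nat_monom by (simp add: add.commute)
    qed
    finally show "(\<Sum>i\<in>I p. monom (1::int) (drop_oo (ins p i))) = monom (of_nat (drop_oo p)) (drop_oo p + e - 1)
            + monom (of_nat (h - drop_oo p)) (drop_oo p + e)" by (simp add: add.commute)
  qed
  finally show "f_poly (Suc L) = (\<Sum>p\<in>cycles_o L. monom (of_nat (drop_oo p)) (drop_oo p + e - 1)
            + monom (of_nat (h - drop_oo p)) (drop_oo p + e))" .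
qed

lemma pderiv_sum': "pderiv (sum f A) = (\<Sum>x\<in>A. pderiv (f x))"
  by (induction A rule: infinite_finite_induct) (simp_all add: pderiv_add)

lemma smult_sum': "smult c (sum f A) = (\<Sum>x\<in>A. smult c (f x))"
  by (induction A rule: infinite_finite_induct) (simp_all add: smult_add_right)

lemma term_even:
  assumes "k \<le> n"
  shows "smult (of_nat n) (monom (1::int) k) - [:0, 1:] * pderiv (monom 1 k) + pderiv (monom 1 k)
     = monom (of_nat k) (k + 0 - 1) + monom (of_nat (n - k)) (k + 0)"
  using assms by (auto simp: poly_eq_iff coeff_monom pderiv_monom coeff_pCons of_nat_diff split: nat.split)

lemma term_odd:
  assumes "k \<le> n"
  shows "smult (of_nat n) ([:0, 1:] * monom (1::int) k) - [:0, 0, 1:] * pderiv (monom 1 k)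
      + [:0, 1:] * pderiv (monom 1 k)
     = monom (of_nat k) (k + 1 - 1) + monom (of_nat (n - k)) (k + 1)"
  using assms by (auto simp: poly_eq_iff coeff_monom pderiv_monom coeff_pCons of_nat_diff split: nat.split)

lemma f_poly_1: "f_poly 1 = 1"
proof -
  have dp: "drop_pos [1] = {}" by (auto simp: drop_pos_def nxt_def)
  have "cycles_o 1 = {[1]}"
  proof
    show "cycles_o 1 \<subseteq> {[1]}"
    proof
      fix p assume "p \<in> cycles_o 1"
      then have "length p = 1" "p ! 0 = 1" by (auto simp: cycles_o_def cycle_reps_def)
      then show "p \<in> {[1]}" by (cases p) auto
    qed
    show "{[1]} \<subseteq> cycles_o 1" using dp by (auto simp: cycles_o_def cycle_reps_def)
  qed
  moreover have "drop_oo [1] = 0" unfolding drop_oo_def dp by simp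
  ultimately show ?thesis by (simp add: f_poly_def)
qed

lemma lin_even:
  "smult (of_nat n) (f_poly L) - [:0, 1:] * pderiv (f_poly L) + pderiv (f_poly L)
   = (\<Sum>p\<in>cycles_o L. smult (of_nat n) (monom 1 (drop_oo p)) - [:0, 1:] * pderiv (monom 1 (drop_oo p))
        + pderiv (monom 1 (drop_oo p)))"
  unfolding f_poly_def pderiv_sum' smult_sum' sum_distrib_left by (simp only: sum_subtractf sum.distrib)

lemma lin_odd:
  "smult (of_nat n) ([:0, 1:] * f_poly L) - [:0, 0, 1:] * pderiv (f_poly L) + [:0, 1:] * pderiv (f_poly L)
   = (\<Sum>p\<in>cycles_o L. smult (of_nat n) ([:0, 1:] * monom 1 (drop_oo p)) - [:0, 0, 1:] * pderiv (monom 1 (drop_oo p))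
        + [:0, 1:] * pderiv (monom 1 (drop_oo p)))"
  unfolding f_poly_def pderiv_sum' smult_sum' sum_distrib_left by (simp only: sum_subtractf sum.distrib)

lemma step_even:
  assumes "n \<ge> 1"
  shows "f_poly (2*n) = smult (of_nat n) (f_poly (2*n-1)) - [:0, 1:] * pderiv (f_poly (2*n-1))
                      + pderiv (f_poly (2*n-1))"
proof -
  define L where "L = 2*n-1"
  have L: "L \<ge> 1" "Suc L = 2*n" using assms by (auto simp: L_def)
  have e: "(if odd (Suc L) then 1 else 0 :: nat) = 0" and h: "Suc L div 2 = n" using L by auto
  have "f_poly (2*n) = (\<Sum>p\<in>cycles_o L. monom (of_nat (drop_oo p)) (drop_oo p + 0 - 1)
            + monom (of_nat (n - drop_oo p)) (drop_oo p + 0))"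
    using recur(1)[OF L(1)] unfolding e h unfolding L(2) .
  also have "\<dots> = (\<Sum>p\<in>cycles_o L. smult (of_nat n) (monom 1 (drop_oo p)) - [:0, 1:] * pderiv (monom 1 (drop_oo p))
        + pderiv (monom 1 (drop_oo p)))"
  proof (rule sum.cong[OF refl])
    fix p assume "p \<in> cycles_o L"
    then have "drop_oo p \<le> n" using recur(2)[OF L(1)] h by metis
    then show "monom (of_nat (drop_oo p) :: int) (drop_oo p + 0 - 1) + monom (of_nat (n - drop_oo p)) (drop_oo p + 0)
      = smult (of_nat n) (monom 1 (drop_oo p)) - [:0, 1:] * pderiv (monom 1 (drop_oo p))
        + pderiv (monom 1 (drop_oo p))"
      by (rule term_even[symmetric])
  qed
  also have "\<dots> = smult (of_nat n) (f_poly L) - [:0, 1:] * pderiv (f_poly L) + pderiv (f_poly L)"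
    by (rule lin_even[symmetric])
  finally show ?thesis by (simp add: L_def)
qed

lemma step_odd:
  assumes "n \<ge> 1"
  shows "f_poly (2*n+1) = smult (of_nat n) ([:0, 1:] * f_poly (2*n))
                      - [:0, 0, 1:] * pderiv (f_poly (2*n)) + [:0, 1:] * pderiv (f_poly (2*n))"
proof -
  define L where "L = 2*n"
  have L: "L \<ge> 1" "Suc L = 2*n+1" using assms by (auto simp: L_def)
  have e: "(if odd (Suc L) then 1 else 0 :: nat) = 1" and h: "Suc L div 2 = n" using L by auto
  have "f_poly (2*n+1) = (\<Sum>p\<in>cycles_o L. monom (of_nat (drop_oo p)) (drop_oo p + 1 - 1)
            + monom (of_nat (n - drop_oo p)) (drop_oo p + 1))"
    using recur(1)[OF L(1)] unfolding e h unfolding L(2) .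
  also have "\<dots> = (\<Sum>p\<in>cycles_o L. smult (of_nat n) ([:0, 1:] * monom 1 (drop_oo p)) - [:0, 0, 1:] * pderiv (monom 1 (drop_oo p))
        + [:0, 1:] * pderiv (monom 1 (drop_oo p)))"
  proof (rule sum.cong[OF refl])
    fix p assume "p \<in> cycles_o L"
    then have "drop_oo p \<le> n" using recur(2)[OF L(1)] h by metis
    then show "monom (of_nat (drop_oo p) :: int) (drop_oo p + 1 - 1) + monom (of_nat (n - drop_oo p)) (drop_oo p + 1)
      = smult (of_nat n) ([:0, 1:] * monom 1 (drop_oo p)) - [:0, 0, 1:] * pderiv (monom 1 (drop_oo p))
        + [:0, 1:] * pderiv (monom 1 (drop_oo p))"
      by (rule term_odd[symmetric])
  qed
  also have "\<dots> = smult (of_nat n) ([:0, 1:] * f_poly L) - [:0, 0, 1:] * pderiv (f_poly L) + [:0, 1:] * pderiv (f_poly L)"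
    by (rule lin_odd[symmetric])
  finally show ?thesis by (simp add: L_def)
qed

theorem lemma3p1:
  shows "f_poly 1 = 1 \<and>
    (\<forall>n::nat. n \<ge> 1 \<longrightarrow>
       f_poly (2*n) = smult (of_nat n) (f_poly (2*n-1)) - [:0, 1:] * pderiv (f_poly (2*n-1))
                      + pderiv (f_poly (2*n-1))
     \<and> f_poly (2*n+1) = smult (of_nat n) ([:0, 1:] * f_poly (2*n))
                      - [:0, 0, 1:] * pderiv (f_poly (2*n)) + [:0, 1:] * pderiv (f_poly (2*n)))"
  using f_poly_1 step_even step_odd by blast

end
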